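(* Fix an irrational $\alpha\in(0,1)$. (i) Let $w\in W_\alpha$. If $|w|<|s_n|$ for some $n\in\mathbb{N}$ with $n\ge2$, then $w$ is a subword of $s_{n+2}$. (ii) Let $w\in W_\alpha$ be a subword of $s_n$ for some $n\in\mathbb{N}$. Then there exist words $x,y\in W_\alpha$ with $xwy=s_{n+3}$ and $|x|,|y|\ge|s_{n+1}|$.
   Context: Let $\alpha=[a_1,a_2,\dots]$ be the continued fraction expansion of $\alpha$. Define words over $\{0,1\}$ by $s_{-1}=1$, $s_0=0$, $s_1=s_0^{a_1-1}s_{-1}$, $s_n=s_{n-1}^{a_n}s_{n-2}$ for $n\ge2$. For $\theta\in[0,1)$, $v_{\alpha,\theta}$ is the two-sided infinite word with letters $v_{\alpha,\theta}(n)=\chi_{[1-\alpha,1)}(n\alpha+\theta\bmod1)$, $n\in\mathbb{Z}$; $W_\alpha$ is the set of all finite non-empty subwords of the words $v_{\alpha,\theta}$, $\theta\in[0,1)$. $|w|$ denotes the length of a word $w$. $\mathbb{N}=\{1,2,\dots\}$. *)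

theory Defs
  imports Complex_Main "HOL-Library.Sublist"
begin

text \<open>Continued fraction expansion alpha = [a_1, a_2, ...] (i.e. [0; a_1, a_2, ...])
  of alpha in (0,1) via the Gauss map: cf_rest alpha 0 = alpha,
  cf_rest alpha (k+1) = frac (1 / cf_rest alpha k), and a_n = floor (1 / cf_rest alpha (n-1)).\<close>

fun cf_rest :: "real \<Rightarrow> nat \<Rightarrow> real" where
  "cf_rest \<alpha> 0 = \<alpha>"
| "cf_rest \<alpha> (Suc k) = frac (1 / cf_rest \<alpha> k)"

definition cf_digit :: "real \<Rightarrow> nat \<Rightarrow> nat" where
  "cf_digit \<alpha> n = nat \<lfloor>1 / cf_rest \<alpha> (n - 1)\<rfloor>"

text \<open>Standard words: s_{-1} = 1, s_0 = 0, s_1 = s_0^{a_1 - 1} s_{-1},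
  s_n = s_{n-1}^{a_n} s_{n-2} for n >= 2. Words are lists over {0,1} (as nat).\<close>

fun std_word :: "real \<Rightarrow> nat \<Rightarrow> nat list" where
  "std_word \<alpha> 0 = [0]"
| "std_word \<alpha> (Suc 0) = concat (replicate (cf_digit \<alpha> 1 - 1) [0]) @ [1]"
| "std_word \<alpha> (Suc (Suc k)) =
     concat (replicate (cf_digit \<alpha> (k + 2)) (std_word \<alpha> (k + 1))) @ std_word \<alpha> k"

definition sturm :: "real \<Rightarrow> real \<Rightarrow> int \<Rightarrow> nat" where
  "sturm \<alpha> \<theta> n = (if frac (of_int n * \<alpha> + \<theta>) \<in> {1 - \<alpha>..<1} then 1 else 0)"

definition W :: "real \<Rightarrow> nat list set" where
  "W \<alpha> = {w. w \<noteq> [] \<and> (\<exists>\<theta>\<in>{0..<1}. \<exists>m::int.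
            w = map (\<lambda>i. sturm \<alpha> \<theta> (m + int i)) [0..<length w])}"

end

theory Submission
  imports Defs "HOL-Library.Sublist" "HOL-Analysis.Kronecker_Approximation_Theorem"
begin


definition good :: "real \<Rightarrow> bool" where
  "good \<alpha> \<longleftrightarrow> \<alpha> \<notin> \<rat> \<and> 0 < \<alpha> \<and> \<alpha> < 1"

lemma good_next:
  assumes "good r"
  shows "good (frac (1/r))" "\<lfloor>1/r\<rfloor> \<ge> 1"
proof -
  have r: "r \<notin> \<rat>" "0 < r" "r < 1" using assms by (auto simp: good_def)
  have "1/r > 1" using r by simp
  then show "\<lfloor>1/r\<rfloor> \<ge> 1" by linarith
  have nq: "frac (1/r) \<notin> \<rat>"
  proof
    assume "frac (1/r) \<in> \<rat>"
    then have "frac (1/r) + of_int \<lfloor>1/r\<rfloor> \<in> \<rat>" by (simp add: Rats_add)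
    then have "1/r \<in> \<rat>" by (simp add: frac_def)
    then have "1/(1/r) \<in> \<rat>" by (rule Rats_divide[OF Rats_1])
    then show False using r by simp
  qed
  moreover have "frac (1/r) \<noteq> 0"
  proof
    assume "frac (1/r) = 0"
    then have "1/r \<in> \<int>" by (simp add: frac_eq_0_iff)
    then have "1/r \<in> \<rat>" using Ints_subset_Rats by blast
    then have "1/(1/r) \<in> \<rat>" by (rule Rats_divide[OF Rats_1])
    then show False using r by simp
  qed
  ultimately show "good (frac (1/r))" unfolding good_def
    using frac_ge_0[of "1/r"] frac_lt_1[of "1/r"] by auto
qed

lemma cf_rest_good: "good \<alpha> \<Longrightarrow> good (cf_rest \<alpha> k)"
  by (induction k) (auto intro: good_next)

lemma cf_rest_shift: "cf_rest \<alpha> (Suc k) = cf_rest (cf_rest \<alpha> 1) k"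
  by (induction k) auto

lemma digit_shift: "k \<ge> 1 \<Longrightarrow> cf_digit \<alpha> (Suc k) = cf_digit (cf_rest \<alpha> 1) k"
proof (cases k)
  case (Suc m)
  have "cf_rest \<alpha> (Suc m) = cf_rest (cf_rest \<alpha> 1) m" by (rule cf_rest_shift)
  then show ?thesis using Suc by (simp add: cf_digit_def)
qed simp

lemma digit_pos: "good \<alpha> \<Longrightarrow> k \<ge> 1 \<Longrightarrow> cf_digit \<alpha> k \<ge> 1"
  unfolding cf_digit_def using good_next(2)[OF cf_rest_good[of \<alpha> "k-1"]] by linarith



abbreviation rep :: "nat \<Rightarrow> nat list \<Rightarrow> nat list" where
  "rep d s \<equiv> concat (replicate d s)"

lemma rep_comm: "rep d s @ s = s @ rep d s"
  by (induction d) auto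

lemma rep_pos: "d \<ge> 1 \<Longrightarrow> rep d s = s @ rep (d-1) s"
  by (cases d) auto

lemma rep_len: "length (rep d s) = d * length s"
  by (induction d) auto

lemma std_len_pos: "length (std_word \<alpha> n) \<ge> 1"
  by (induction \<alpha> n rule: std_word.induct) auto

lemma std_ne: "std_word \<alpha> n \<noteq> []"
  using std_len_pos[of \<alpha> n] by auto

lemma std_prefix:
  assumes "good \<alpha>" "n \<ge> 1"
  shows "prefix (std_word \<alpha> n) (std_word \<alpha> (Suc n))"
proof -
  obtain m where m: "n = Suc m" using assms(2) by (cases n) auto
  have "cf_digit \<alpha> (m+2) \<ge> 1" using digit_pos[OF assms(1)] by simp
  then show ?thesis using m by (simp add: rep_pos)
qed

lemma std_len_Suc:
  assumes "good \<alpha>"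
  shows "length (std_word \<alpha> n) \<le> length (std_word \<alpha> (Suc n))"
proof (cases n)
  case 0
  have "cf_digit \<alpha> 1 \<ge> 1" using digit_pos[OF assms(1)] by simp
  then show ?thesis using 0 by (simp add: rep_len)
next
  case (Suc m)
  have "n \<ge> 1" using Suc by simp
  then have "prefix (std_word \<alpha> n) (std_word \<alpha> (Suc n))" by (rule std_prefix[OF assms])
  then show ?thesis by (rule prefix_length_le)
qed

lemma std_len_strict:
  assumes "good \<alpha>" "n \<ge> 1"
  shows "length (std_word \<alpha> n) < length (std_word \<alpha> (Suc n))"
proof -
  obtain m where m: "n = Suc m" using assms(2) by (cases n) auto
  have "cf_digit \<alpha> (m+2) \<ge> 1" using digit_pos[OF assms(1)] by simp
  then show ?thesis using m std_ne[of \<alpha> m] by (simp add: rep_pos)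
qed

lemma std_len_mono:
  assumes "good \<alpha>" "m \<le> n"
  shows "length (std_word \<alpha> m) \<le> length (std_word \<alpha> n)"
  using assms(2)
proof (induction n rule: dec_induct)
  case (step n)
  then show ?case using std_len_Suc[OF assms(1), of n] by simp
qed simp

lemma std_len_ge:
  assumes "good \<alpha>" "n \<ge> 1"
  shows "length (std_word \<alpha> n) \<ge> n"
  using assms(2)
proof (induction n rule: dec_induct)
  case base
  then show ?case using std_len_pos[of \<alpha> 1] by simp
next
  case (step n)
  then show ?case using std_len_strict[OF assms(1), of n] by simp
qed

lemma std_swap:
  assumes "good \<alpha>"
  shows "\<exists>u x y. std_word \<alpha> (Suc m) @ std_word \<alpha> m = u @ [x,y]
             \<and> std_word \<alpha> m @ std_word \<alpha> (Suc m) = u @ [y,x]"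
proof (induction m)
  case 0
  have "[0::nat] @ replicate (cf_digit \<alpha> 1 - 1) 0 = replicate (cf_digit \<alpha> 1 - 1) 0 @ [0]"
    by (simp add: replicate_append_same)
  then show ?case
    by (rule_tac x="replicate (cf_digit \<alpha> 1 - 1) 0" in exI) auto
next
  case (Suc m)
  then obtain u x y where u: "std_word \<alpha> (Suc m) @ std_word \<alpha> m = u @ [x,y]"
    "std_word \<alpha> m @ std_word \<alpha> (Suc m) = u @ [y,x]" by blast
  let ?d = "cf_digit \<alpha> (m+2)" and ?s = "std_word \<alpha> (Suc m)"
  have e1: "std_word \<alpha> (Suc (Suc m)) @ ?s = (rep ?d ?s @ u) @ [y,x]"
    using u(2) by simp
  have e2: "?s @ std_word \<alpha> (Suc (Suc m)) = (rep ?d ?s @ u) @ [x,y]"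
  proof -
    have "?s @ std_word \<alpha> (Suc (Suc m)) = (?s @ rep ?d ?s) @ std_word \<alpha> m" by simp
    also have "\<dots> = rep ?d ?s @ (?s @ std_word \<alpha> m)" by (simp add: rep_comm[symmetric])
    finally show ?thesis using u(1) by simp
  qed
  show ?case using e1 e2 by blast
qed



lemma suffix_short:
  assumes "suffix x (p @ c)" "length x \<le> length c"
  shows "suffix x c"
  using assms by (meson suffixI suffix_length_suffix)

lemma junction:
  assumes g: "good \<alpha>" and j: "j \<ge> 1"
    and x: "x' \<noteq> []" and y: "y' \<noteq> []"
    and sx: "suffix x' (std_word \<alpha> (Suc (Suc j)))"
    and py: "prefix y' (std_word \<alpha> (Suc j))"
    and len: "length (x' @ y') \<le> length (std_word \<alpha> j)"
  shows "sublist (x' @ y') (std_word \<alpha> (Suc (Suc j)))"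
proof -
  let ?A = "std_word \<alpha> (Suc (Suc j))" and ?B = "std_word \<alpha> (Suc j)" and ?C = "std_word \<alpha> j"
  let ?d = "cf_digit \<alpha> (j+2)"
  have d: "?d \<ge> 1" using digit_pos[OF g] by simp
  have A: "?A = rep (?d - 1) ?B @ (?B @ ?C)"
    using d by (simp add: rep_pos rep_comm)
  have "suffix x' (rep ?d ?B @ ?C)" using sx by simp
  then have "suffix x' ?C" by (rule suffix_short) (use len in simp)
  then obtain c1 where c1: "?C = c1 @ x'" by (auto simp: suffix_def)
  obtain b2 where b2: "?B = y' @ b2" using py by (auto simp: prefix_def)
  obtain u a b where u: "?B @ ?C = u @ [a,b]" "?C @ ?B = u @ [b,a]"
    using std_swap[OF g, of j] by blast
  have BC: "length ?B \<ge> length ?C + 1" using std_len_strict[OF g j] by simp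
  have lu: "length u + 2 = length ?B + length ?C" using arg_cong[OF u(1), of length] by simp
  have eq: "(c1 @ x' @ y') @ b2 = u @ [b,a]" using u(2) c1 b2 by simp
  moreover have "length (c1 @ x' @ y') \<le> length u"
    using lu BC len x c1 by (cases x') auto
  ultimately obtain t where "u = (c1 @ x' @ y') @ t"
    by (metis append_eq_append_conv_if append.assoc append_take_drop_id)
  then have "sublist (x' @ y') u" by (metis append.assoc sublist_appendI)
  moreover have "sublist u ?A" using A u(1) by (metis append.assoc sublist_appendI)
  ultimately show ?thesis by (rule sublist_order.order_trans)
qed


lemma chain_generic:
  fixes A B w :: "nat list"
  assumes BA: "prefix B A" and LB: "Lc \<le> length B" and len: "length w \<le> Lc"
    and junc: "\<And>x' y'. x' \<noteq> [] \<Longrightarrow> y' \<noteq> [] \<Longrightarrow> suffix x' A \<Longrightarrow> prefix y' B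
               \<Longrightarrow> length (x' @ y') \<le> Lc \<Longrightarrow> sublist (x' @ y') A"
  shows "sublist w (rep e A @ B) \<Longrightarrow> sublist w A"
proof (induction e)
  case 0
  then have "sublist w B" by simp
  then show ?case using prefix_imp_sublist[OF BA] by (rule sublist_order.order_trans)
next
  case (Suc e)
  have pre: "prefix B (rep e A @ B)"
  proof (cases e)
    case (Suc e')
    then have "rep e A @ B = A @ (rep e' A @ B)" by simp
    then show ?thesis using BA by simp
  qed simp
  have "sublist w (A @ (rep e A @ B))" using Suc.prems by simp
  then consider "sublist w A" | "sublist w (rep e A @ B)"
    | w1 w2 where "w = w1 @ w2" "suffix w1 A" "prefix w2 (rep e A @ B)"
    unfolding sublist_append by blast
  then show ?case
  proof cases
    case 1 then show ?thesis .
  next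
    case 2 then show ?thesis by (rule Suc.IH)
  next
    case 3
    show ?thesis
    proof (cases "w1 = []")
      case True
      then have "sublist w (rep e A @ B)" using 3 by (simp add: prefix_imp_sublist)
      then show ?thesis by (rule Suc.IH)
    next
      case w1: False
      show ?thesis
      proof (cases "w2 = []")
        case True
        then show ?thesis using 3 by (simp add: suffix_imp_sublist)
      next
        case w2: False
        have "length w2 \<le> length B" using len LB 3 by simp
        then have "prefix w2 B" using pre 3(3) prefix_length_prefix by blast
        then show ?thesis using junc[OF w1 w2 3(2)] 3(1) len by simp
      qed
    qed
  qed
qed

lemma chain_step:
  assumes g: "good \<alpha>" and j: "j \<ge> 1"
    and len: "length w \<le> length (std_word \<alpha> j)"
    and sw: "sublist w (std_word \<alpha> (Suc (Suc (Suc j))))"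
  shows "sublist w (std_word \<alpha> (Suc (Suc j)))"
proof -
  have BA: "prefix (std_word \<alpha> (Suc j)) (std_word \<alpha> (Suc (Suc j)))"
    by (rule std_prefix[OF g]) simp
  have CB: "length (std_word \<alpha> j) \<le> length (std_word \<alpha> (Suc j))"
    by (rule std_len_Suc[OF g])
  have e: "std_word \<alpha> (Suc (Suc (Suc j))) =
      rep (cf_digit \<alpha> (Suc j + 2)) (std_word \<alpha> (Suc (Suc j))) @ std_word \<alpha> (Suc j)"
    by (rule std_word.simps(3)[of \<alpha> "Suc j", unfolded Suc_eq_plus1[symmetric]])
  have sw': "sublist w (rep (cf_digit \<alpha> (Suc j + 2)) (std_word \<alpha> (Suc (Suc j))) @ std_word \<alpha> (Suc j))"
    using sw unfolding e .
  show ?thesis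
    by (rule chain_generic[OF BA CB len junction[OF g j] sw'])
qed

lemma chain:
  assumes g: "good \<alpha>" and n: "n \<ge> 1"
    and len: "length w \<le> length (std_word \<alpha> n)"
    and K: "K \<ge> n + 2" and sw: "sublist w (std_word \<alpha> K)"
  shows "sublist w (std_word \<alpha> (n + 2))"
  using K sw
proof (induction K rule: dec_induct)
  case base
  then show ?case .
next
  case (step K)
  define j where "j = K - 2"
  have jK: "K = Suc (Suc j)" and jn: "j \<ge> n"
    using step.hyps(1) unfolding j_def by arith+
  have lj: "length w \<le> length (std_word \<alpha> j)"
    by (rule le_trans[OF len std_len_mono[OF g jn]])
  have j1: "j \<ge> 1" using jn n by arith
  have "sublist w (std_word \<alpha> (Suc (Suc j)))"
    by (rule chain_step[OF g j1 lj step.prems[unfolded jK]])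
  then have "sublist w (std_word \<alpha> K)" using jK by (simp only:)
  then show ?case by (rule step.IH)
qed

lemma std_rec: "std_word \<alpha> (k+2) = rep (cf_digit \<alpha> (k+2)) (std_word \<alpha> (k+1)) @ std_word \<alpha> k"
  using std_word.simps(3)[of \<alpha> k] by (simp only: add_2_eq_Suc')

lemma part2_comb:
  assumes g: "good \<alpha>" and sw: "sublist w (std_word \<alpha> n)"
  shows "\<exists>x y. x @ w @ y = std_word \<alpha> (n + 3)
           \<and> length x \<ge> length (std_word \<alpha> (n + 1))
           \<and> length y \<ge> length (std_word \<alpha> (n + 1))"
proof -
  obtain p q where pq: "std_word \<alpha> n = p @ w @ q" using sw by (auto simp: sublist_def)
  let ?a2 = "cf_digit \<alpha> (n+2)" and ?a3 = "cf_digit \<alpha> (n+3)"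
  have a2: "?a2 \<ge> 1" and a3: "?a3 \<ge> 1" using digit_pos[OF g] by auto
  have s2: "std_word \<alpha> (n+2) = rep ?a2 (std_word \<alpha> (n+1)) @ std_word \<alpha> n"
    by (rule std_rec)
  have s3: "std_word \<alpha> (n+3) = rep ?a3 (std_word \<alpha> (n+2)) @ std_word \<alpha> (n+1)"
  proof -
    have e: "n+1+2 = n+3" "n+1+1 = n+2" by simp_all
    show ?thesis using std_rec[of \<alpha> "n+1"] unfolding e .
  qed
  have eq: "std_word \<alpha> (n+3) = (rep ?a2 (std_word \<alpha> (n+1)) @ p) @ w @
        (q @ rep (?a3 - 1) (std_word \<alpha> (n+2)) @ std_word \<alpha> (n+1))"
    by (simp only: s3 s2 pq rep_pos[OF a3] append_assoc)
  have lx: "length (rep ?a2 (std_word \<alpha> (n+1)) @ p) \<ge> length (std_word \<alpha> (n + 1))"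
  proof -
    have "length (std_word \<alpha> (n+1)) \<le> ?a2 * length (std_word \<alpha> (n+1))" using a2 by (simp del: std_word.simps)
    then show ?thesis unfolding length_append rep_len by (rule trans_le_add1)
  qed
  have ly: "length (q @ rep (?a3 - 1) (std_word \<alpha> (n+2)) @ std_word \<alpha> (n+1)) \<ge> length (std_word \<alpha> (n + 1))"
    by (simp del: std_word.simps)
  have eq': "(rep ?a2 (std_word \<alpha> (n+1)) @ p) @ w @
        (q @ rep (?a3 - 1) (std_word \<alpha> (n+2)) @ std_word \<alpha> (n+1)) = std_word \<alpha> (n+3)"
    using eq by (rule sym)
  show ?thesis using eq' lx ly by blast
qed



definition cw :: "real \<Rightarrow> real \<Rightarrow> nat" where
  "cw \<alpha> y = nat (\<lfloor>y + \<alpha>\<rfloor> - \<lfloor>y\<rfloor>)"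

definition F :: "real \<Rightarrow> real \<Rightarrow> nat \<Rightarrow> nat list" where
  "F \<alpha> x L = map (\<lambda>i. cw \<alpha> (x + real i * \<alpha>)) [0..<L]"

lemma sturm_cw:
  assumes "0 < \<alpha>" "\<alpha> < 1"
  shows "sturm \<alpha> \<theta> n = cw \<alpha> (of_int n * \<alpha> + \<theta>)"
proof -
  let ?y = "of_int n * \<alpha> + \<theta>"
  have f: "frac ?y = ?y - \<lfloor>?y\<rfloor>" by (simp add: frac_def)
  have lo: "\<lfloor>?y\<rfloor> \<le> \<lfloor>?y + \<alpha>\<rfloor>" using assms by (intro floor_mono) simp
  have hi: "\<lfloor>?y + \<alpha>\<rfloor> \<le> \<lfloor>?y\<rfloor> + 1" using assms by linarith
  have le: "(\<lfloor>?y\<rfloor> + 1 \<le> \<lfloor>?y + \<alpha>\<rfloor>) \<longleftrightarrow> of_int (\<lfloor>?y\<rfloor> + 1) \<le> ?y + \<alpha>"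
    by (rule le_floor_iff)
  have "\<lfloor>?y + \<alpha>\<rfloor> = \<lfloor>?y\<rfloor> + 1 \<longleftrightarrow> frac ?y \<ge> 1 - \<alpha>" using f le hi by linarith
  then show ?thesis unfolding sturm_def cw_def using lo hi frac_lt_1[of ?y]
    by (cases "\<lfloor>?y + \<alpha>\<rfloor> = \<lfloor>?y\<rfloor> + 1") auto
qed

lemma cw_shift: "cw \<alpha> (y + of_int k) = cw \<alpha> y"
proof -
  have "y + of_int k + \<alpha> = (y + \<alpha>) + of_int k" by simp
  then show ?thesis unfolding cw_def by (simp only: floor_add_int) simp
qed

lemma F_append: "F \<alpha> x (L1 + L2) = F \<alpha> x L1 @ F \<alpha> (x + real L1 * \<alpha>) L2"
  by (rule nth_equalityI) (auto simp: F_def nth_append algebra_simps of_nat_diff)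

lemma F_length[simp]: "length (F \<alpha> x L) = L"
  by (simp add: F_def)

lemma F_nth: "i < L \<Longrightarrow> F \<alpha> x L ! i = cw \<alpha> (x + real i * \<alpha>)"
  by (simp add: F_def)

lemma W_F:
  assumes "0 < \<alpha>" "\<alpha> < 1" "w \<in> W \<alpha>"
  shows "\<exists>x. w = F \<alpha> x (length w)"
proof -
  obtain \<theta> m where w: "w = map (\<lambda>i. sturm \<alpha> \<theta> (m + int i)) [0..<length w]"
    using assms(3) by (auto simp: W_def)
  have "w = F \<alpha> (of_int m * \<alpha> + \<theta>) (length w)"
    apply (subst w)
    unfolding F_def using assms(1,2)
    by (simp add: sturm_cw algebra_simps)
  then show ?thesis by blast
qed

lemma F_in_W:
  assumes "0 < \<alpha>" "\<alpha> < 1" "L > 0"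
  shows "F \<alpha> x L \<in> W \<alpha>"
proof -
  have "F \<alpha> x L = map (\<lambda>i. sturm \<alpha> (frac x) (0 + int i)) [0..<L]"
    unfolding F_def
  proof (rule map_cong[OF refl])
    fix i assume "i \<in> set [0..<L]"
    have "x + real i * \<alpha> = (of_int (int i) * \<alpha> + frac x) + of_int \<lfloor>x\<rfloor>"
      by (simp add: frac_def)
    then show "cw \<alpha> (x + real i * \<alpha>) = sturm \<alpha> (frac x) (0 + int i)"
      using assms by (simp only: cw_shift sturm_cw) simp
  qed
  then show ?thesis unfolding W_def using assms frac_ge_0[of x] frac_lt_1[of x]
    by (intro CollectI conjI) (auto intro!: bexI[of _ "frac x"] exI[of _ 0])
qed

lemma sublist_F:
  assumes "sublist w (F \<alpha> x L)"
  shows "\<exists>x'. w = F \<alpha> x' (length w)"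
proof -
  obtain p s where ps: "F \<alpha> x L = p @ w @ s" using assms by (auto simp: sublist_def)
  have L: "L = length p + (length w + length s)"
    using arg_cong[OF ps, of length] by simp
  have "F \<alpha> x L = F \<alpha> x (length p) @ (F \<alpha> (x + real (length p) * \<alpha>) (length w) @
      F \<alpha> (x + real (length p) * \<alpha> + real (length w) * \<alpha>) (length s))"
    unfolding L F_append ..
  then have e: "p @ (w @ s) = F \<alpha> x (length p) @ (F \<alpha> (x + real (length p) * \<alpha>) (length w) @
      F \<alpha> (x + real (length p) * \<alpha> + real (length w) * \<alpha>) (length s))"
    using ps by simp
  have "w @ s = F \<alpha> (x + real (length p) * \<alpha>) (length w) @
      F \<alpha> (x + real (length p) * \<alpha> + real (length w) * \<alpha>) (length s)"
    using e by (simp add: append_eq_append_conv)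
  then have "w = F \<alpha> (x + real (length p) * \<alpha>) (length w)"
    using append_eq_append_conv[THEN iffD1] by (metis F_length)
  then show ?thesis by blast
qed



lemma F_shift_int: "F \<alpha> (y + of_int K) L = F \<alpha> y L"
  unfolding F_def
proof (rule map_cong[OF refl])
  fix i
  have "y + of_int K + real i * \<alpha> = (y + real i * \<alpha>) + of_int K" by simp
  then show "cw \<alpha> (y + of_int K + real i * \<alpha>) = cw \<alpha> (y + real i * \<alpha>)"
    by (simp only: cw_shift)
qed

lemma F_Suc: "F \<alpha> x (Suc L) = F \<alpha> x L @ [cw \<alpha> (x + real L * \<alpha>)]"
  by (simp add: F_def)

lemma cw_rcont: "\<exists>g>0. \<forall>s. 0 \<le> s \<longrightarrow> s < g \<longrightarrow> cw \<alpha> (y + s) = cw \<alpha> y"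
proof -
  define g where "g = min (of_int \<lfloor>y\<rfloor> + 1 - y) (of_int \<lfloor>y + \<alpha>\<rfloor> + 1 - (y + \<alpha>))"
  have "g > 0" unfolding g_def by linarith
  moreover have "cw \<alpha> (y + s) = cw \<alpha> y" if "0 \<le> s" "s < g" for s
  proof -
    have "\<lfloor>y + s\<rfloor> = \<lfloor>y\<rfloor>" using that unfolding g_def by (simp add: floor_eq_iff) linarith
    moreover have "\<lfloor>y + s + \<alpha>\<rfloor> = \<lfloor>y + \<alpha>\<rfloor>" using that unfolding g_def by (simp add: floor_eq_iff) linarith
    ultimately show ?thesis by (simp add: cw_def)
  qed
  ultimately show ?thesis by blast
qed

lemma F_rcont: "\<exists>d>0. \<forall>s. 0 \<le> s \<longrightarrow> s < d \<longrightarrow> F \<alpha> (x + s) L = F \<alpha> x L"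
proof (induction L)
  case 0
  show ?case by (rule exI[of _ 1]) (simp add: F_def)
next
  case (Suc L)
  then obtain d where d: "d > 0" "\<And>s. 0 \<le> s \<Longrightarrow> s < d \<Longrightarrow> F \<alpha> (x + s) L = F \<alpha> x L" by blast
  obtain g where g: "g > 0" "\<And>s. 0 \<le> s \<Longrightarrow> s < g \<Longrightarrow> cw \<alpha> (x + real L * \<alpha> + s) = cw \<alpha> (x + real L * \<alpha>)"
    using cw_rcont[of \<alpha> "x + real L * \<alpha>"] by blast
  have "F \<alpha> (x + s) (Suc L) = F \<alpha> x (Suc L)" if "0 \<le> s" "s < min d g" for s
  proof -
    have e: "x + s + real L * \<alpha> = x + real L * \<alpha> + s" by simp
    have "cw \<alpha> (x + s + real L * \<alpha>) = cw \<alpha> (x + real L * \<alpha>)"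
      unfolding e using that g by simp
    then show ?thesis using that d by (simp add: F_Suc)
  qed
  then show ?case using d g by (intro exI[of _ "min d g"]) auto
qed

lemma density:
  assumes "\<alpha> \<notin> \<rat>" "\<delta> > 0"
  shows "\<exists>k s K. k > 0 \<and> 0 \<le> s \<and> s < \<delta> \<and> real k * \<alpha> = x + s + of_int K"
proof -
  define d where "d = min \<delta> (1 - frac x)"
  have d: "d > 0" "d \<le> \<delta>" "frac x + d \<le> 1" unfolding d_def using assms frac_lt_1[of x] by auto
  have t: "0 \<le> frac x + d/2" "frac x + d/2 \<le> 1" using d frac_ge_0[of x] by auto
  obtain k where k: "k > 0" "\<bar>frac (real k * \<alpha>) - (frac x + d/2)\<bar> < d/2"
    using Kronecker_approx_1_explicit[OF assms(1) t, of "d/2"] d by auto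
  define s where "s = frac (real k * \<alpha>) - frac x"
  have "0 \<le> s" "s < \<delta>" using k(2) d unfolding s_def abs_less_iff by linarith+
  moreover have "real k * \<alpha> = x + s + of_int (\<lfloor>real k * \<alpha>\<rfloor> - \<lfloor>x\<rfloor>)"
    unfolding s_def by (simp add: frac_def)
  ultimately show ?thesis using k(1) by blast
qed

lemma W_sub:
  assumes g: "good \<alpha>" and w: "w \<in> W \<alpha>"
  shows "\<exists>N. sublist w (F \<alpha> \<alpha> N)"
proof -
  have a: "\<alpha> \<notin> \<rat>" "0 < \<alpha>" "\<alpha> < 1" using g by (auto simp: good_def)
  obtain x where x: "w = F \<alpha> x (length w)" using W_F[OF a(2,3) w] by blast
  obtain d where d: "d > 0" "\<And>s. 0 \<le> s \<Longrightarrow> s < d \<Longrightarrow> F \<alpha> (x + s) (length w) = F \<alpha> x (length w)"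
    using F_rcont by blast
  obtain k s K where k: "k > 0" "0 \<le> s" "s < d" "real k * \<alpha> = x + s + of_int K"
    using density[OF a(1) d(1), of x] by blast
  have "F \<alpha> (real k * \<alpha>) (length w) = w"
    using k(4) F_shift_int[of \<alpha> "x + s" K] d(2)[OF k(2,3)] x by simp
  moreover have "\<alpha> + real (k - 1) * \<alpha> = real k * \<alpha>" using k(1) by (simp add: of_nat_diff algebra_simps)
  ultimately have "F \<alpha> \<alpha> (k - 1 + length w) = F \<alpha> \<alpha> (k - 1) @ w"
    by (simp add: F_append)
  then show ?thesis by (metis sublist_append_leftI)
qed



definition phi0 :: "nat \<Rightarrow> nat \<Rightarrow> nat list" where
  "phi0 a c = (if c = 0 then replicate (a-1) 0 @ [1] else replicate (a-1) 0 @ [1,0])"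

definition phi :: "nat \<Rightarrow> nat list \<Rightarrow> nat list" where
  "phi a w = concat (map (phi0 a) w)"

lemma phi_append[simp]: "phi a (xs @ ys) = phi a xs @ phi a ys"
  by (simp add: phi_def)

lemma phi_rep[simp]: "phi a (rep d xs) = rep d (phi a xs)"
  by (induction d) (auto simp: phi_def)

lemma concat_rep_single: "concat (replicate n [x]) = replicate n x"
  by (induction n) auto

lemma std_phi_pair:
  assumes g: "good \<alpha>"
  shows "std_word \<alpha> (Suc n) = phi (cf_digit \<alpha> 1) (std_word (cf_rest \<alpha> 1) n) \<and>
         std_word \<alpha> (Suc (Suc n)) = phi (cf_digit \<alpha> 1) (std_word (cf_rest \<alpha> 1) (Suc n))"
proof (induction n)
  case 0
  let ?a = "cf_digit \<alpha> (Suc 0)" and ?\<beta> = "cf_rest \<alpha> (Suc 0)" and ?d = "cf_digit \<alpha> (Suc (Suc 0))"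
  have s1: "std_word \<alpha> (Suc 0) = phi0 ?a 0" by (simp add: phi0_def concat_rep_single)
  have d: "cf_digit ?\<beta> (Suc 0) = ?d" using digit_shift[of 1 \<alpha>] by simp
  have d1: "?d \<ge> 1" using digit_pos[OF g] by simp
  have "phi ?a (std_word ?\<beta> (Suc 0)) = rep (?d - 1) (phi0 ?a 0) @ phi0 ?a 1"
    using d by (simp add: concat_rep_single phi_def)
  also have "\<dots> = rep (?d - 1) (phi0 ?a 0) @ phi0 ?a 0 @ [0]"
    by (simp add: phi0_def)
  also have "\<dots> = rep ?d (phi0 ?a 0) @ [0]"
    using d1 rep_comm[of "?d - 1" "phi0 ?a 0"] by (simp add: rep_pos)
  also have "\<dots> = std_word \<alpha> (Suc (Suc 0))"
    using s1 by (simp del: std_word.simps add: std_word.simps(1) std_word.simps(3)[of \<alpha> 0])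
  finally have "std_word \<alpha> (Suc (Suc 0)) = phi ?a (std_word ?\<beta> (Suc 0))" ..
  moreover have "std_word \<alpha> (Suc 0) = phi ?a (std_word ?\<beta> 0)" using s1 by (simp add: phi_def)
  ultimately show ?case by simp
next
  case (Suc n)
  let ?a = "cf_digit \<alpha> 1" and ?\<beta> = "cf_rest \<alpha> 1"
  have e1: "std_word \<alpha> (Suc n) = phi ?a (std_word ?\<beta> n)"
    and e2: "std_word \<alpha> (Suc (Suc n)) = phi ?a (std_word ?\<beta> (Suc n))" using Suc.IH by auto
  have d: "cf_digit \<alpha> (Suc n + 2) = cf_digit ?\<beta> (n+2)" using digit_shift[of "n+2" \<alpha>] by simp
  have "std_word \<alpha> (Suc (Suc (Suc n))) = rep (cf_digit \<alpha> (Suc n + 2)) (std_word \<alpha> (Suc n + 1)) @ std_word \<alpha> (Suc n)"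
    by (rule std_word.simps(3))
  also have "\<dots> = rep (cf_digit ?\<beta> (n+2)) (phi ?a (std_word ?\<beta> (Suc n))) @ phi ?a (std_word ?\<beta> n)"
    unfolding d Suc_eq_plus1[symmetric] e1 e2 ..
  also have "\<dots> = phi ?a (rep (cf_digit ?\<beta> (n+2)) (std_word ?\<beta> (n+1)) @ std_word ?\<beta> n)"
    by (simp only: phi_append phi_rep Suc_eq_plus1)
  also have "\<dots> = phi ?a (std_word ?\<beta> (Suc (Suc n)))"
    by (simp only: std_word.simps(3)[of ?\<beta> n])
  finally show ?case using e2 by (simp only:)
qed



lemma alpha_rel:
  assumes g: "good \<alpha>"
  shows "cf_digit \<alpha> 1 \<ge> 1" "good (cf_rest \<alpha> 1)"
    "\<alpha> = 1 / (real (cf_digit \<alpha> 1) + cf_rest \<alpha> 1)"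
proof -
  show "cf_digit \<alpha> 1 \<ge> 1" using digit_pos[OF g] by simp
  show "good (cf_rest \<alpha> 1)" using cf_rest_good[OF g] .
  have fl: "\<lfloor>1/\<alpha>\<rfloor> \<ge> 1" using good_next(2)[OF g] .
  have n: "real (nat \<lfloor>1/\<alpha>\<rfloor>) = of_int \<lfloor>1/\<alpha>\<rfloor>" by (rule of_nat_nat) (use fl in linarith)
  have "real (cf_digit \<alpha> 1) + cf_rest \<alpha> 1 = of_int \<lfloor>1/\<alpha>\<rfloor> + frac (1/\<alpha>)"
    using n by (simp add: cf_digit_def)
  also have "\<dots> = 1/\<alpha>" by (simp add: frac_def)
  finally show "\<alpha> = 1 / (real (cf_digit \<alpha> 1) + cf_rest \<alpha> 1)" by simp
qed

lemma floor_strict: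
  assumes g: "good \<beta>" and k: "k \<ge> 1"
  shows "of_int \<lfloor>real k * \<beta>\<rfloor> < real k * \<beta>"
proof -
  have le: "of_int \<lfloor>real k * \<beta>\<rfloor> \<le> real k * \<beta>" by (rule of_int_floor_le)
  have ne: "of_int \<lfloor>real k * \<beta>\<rfloor> \<noteq> real k * \<beta>"
  proof
    assume e: "of_int \<lfloor>real k * \<beta>\<rfloor> = real k * \<beta>"
    have "\<beta> = of_int \<lfloor>real k * \<beta>\<rfloor> / real k" unfolding e using k by simp
    also have "\<dots> \<in> \<rat>" by (intro Rats_divide) auto
    finally show False using g by (simp add: good_def)
  qed
  show ?thesis using le ne by linarith
qed

lemma floor_alpha:
  assumes rel: "\<alpha> = 1 / c" and c: "c > 0"
    and lo: "of_int m * c \<le> real y" and hi: "real y < (of_int m + 1) * c"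
  shows "\<lfloor>real y * \<alpha>\<rfloor> = m"
proof -
  have "real y * \<alpha> = real y / c" using rel by simp
  moreover have "of_int m \<le> real y / c" using lo c by (simp add: pos_le_divide_eq)
  moreover have "real y / c < of_int m + 1" using hi c by (simp add: pos_divide_less_eq)
  ultimately show ?thesis by (simp add: floor_eq_iff)
qed

lemma cw_pos: "cw \<alpha> (\<alpha> + real j * \<alpha>) = nat (\<lfloor>real (j+2) * \<alpha>\<rfloor> - \<lfloor>real (j+1) * \<alpha>\<rfloor>)"
proof -
  have e1: "real (j+1) * \<alpha> + \<alpha> = real (j+2) * \<alpha>" by (simp add: algebra_simps)
  have e2: "\<alpha> + real j * \<alpha> = real (j+1) * \<alpha>" by (simp add: algebra_simps)
  show ?thesis unfolding cw_def e2 e1 ..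
qed

context
  fixes a N :: nat and \<alpha> \<beta> :: real
  assumes a1: "a \<ge> 1" and gb: "good \<beta>" and rel: "\<alpha> = 1 / (real a + \<beta>)"
begin

definition "ff = \<lfloor>real (N+1) * \<beta>\<rfloor>"
definition "MM = a * N + nat ff"

lemma b_pos: "0 < \<beta>" "\<beta> < 1" using gb by (auto simp: good_def)

lemma ff_ge: "ff \<ge> 0" unfolding ff_def using b_pos by simp

lemma ff_props: "of_int ff < real (N+1) * \<beta>" "real (N+1) * \<beta> < of_int ff + 1"
  unfolding ff_def using floor_strict[OF gb, of "N+1"] frac_lt_1[of "real (N+1) * \<beta>"]
  by (simp_all add: frac_def)

lemma MM_real: "real MM = real a * real N + of_int ff"
  unfolding MM_def using ff_ge by simp

lemma c_pos: "real a + \<beta> > 0" using b_pos by simp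

lemma fl_mid:
  assumes "MM + 1 \<le> y" "y \<le> MM + a"
  shows "\<lfloor>real y * \<alpha>\<rfloor> = int N"
proof (rule floor_alpha[OF rel c_pos])
  have y1: "real y \<ge> real a * real N + of_int ff + 1" using assms(1) MM_real by linarith
  have y2: "real y \<le> real a * real N + of_int ff + real a" using assms(2) MM_real by linarith
  have p: "of_int ff < real N * \<beta> + \<beta>" "real N * \<beta> + \<beta> < of_int ff + 1"
    using ff_props by (simp_all add: algebra_simps)
  show "of_int (int N) * (real a + \<beta>) \<le> real y"
    using y1 p b_pos by (simp add: algebra_simps)
  show "real y < (of_int (int N) + 1) * (real a + \<beta>)"
    using y2 p by (simp add: algebra_simps)
qed

lemma fl_top: "\<lfloor>real (MM + a + 1) * \<alpha>\<rfloor> = int N + 1"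
proof (rule floor_alpha[OF rel c_pos])
  have p: "of_int ff < real N * \<beta> + \<beta>" "real N * \<beta> + \<beta> < of_int ff + 1"
    using ff_props by (simp_all add: algebra_simps)
  have y: "real (MM + a + 1) = real a * real N + of_int ff + real a + 1" using MM_real by simp
  show "of_int (int N + 1) * (real a + \<beta>) \<le> real (MM + a + 1)"
    unfolding y using p by (simp add: algebra_simps)
  show "real (MM + a + 1) < (of_int (int N + 1) + 1) * (real a + \<beta>)"
    unfolding y using p b_pos a1 by (simp add: algebra_simps)
qed

lemma fl_top2:
  assumes "\<lfloor>real (N+2) * \<beta>\<rfloor> = ff + 1"
  shows "\<lfloor>real (MM + a + 2) * \<alpha>\<rfloor> = int N + 1"
proof (rule floor_alpha[OF rel c_pos])
  have p: "of_int ff < real N * \<beta> + \<beta>" "real N * \<beta> + \<beta> < of_int ff + 1"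
    using ff_props by (simp_all add: algebra_simps)
  have q: "of_int ff + 1 < real N * \<beta> + 2 * \<beta>"
    using floor_strict[OF gb, of "N+2"] assms by (simp add: algebra_simps)
  have y: "real (MM + a + 2) = real a * real N + of_int ff + real a + 2" using MM_real by simp
  show "of_int (int N + 1) * (real a + \<beta>) \<le> real (MM + a + 2)"
    unfolding y using p by (simp add: algebra_simps)
  show "real (MM + a + 2) < (of_int (int N + 1) + 1) * (real a + \<beta>)"
    unfolding y using q a1 by (simp add: algebra_simps)
qed

lemma block1: "F \<alpha> (\<alpha> + real MM * \<alpha>) a = replicate (a-1) 0 @ [1]"
proof (rule nth_equalityI)
  show "length (F \<alpha> (\<alpha> + real MM * \<alpha>) a) = length (replicate (a - 1) 0 @ [1::nat])"
    using a1 by simp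
  fix i assume "i < length (F \<alpha> (\<alpha> + real MM * \<alpha>) a)"
  then have i: "i < a" by simp
  have e: "\<alpha> + real MM * \<alpha> + real i * \<alpha> = \<alpha> + real (MM + i) * \<alpha>" by (simp add: algebra_simps)
  have v: "F \<alpha> (\<alpha> + real MM * \<alpha>) a ! i = nat (\<lfloor>real (MM + i + 2) * \<alpha>\<rfloor> - \<lfloor>real (MM + i + 1) * \<alpha>\<rfloor>)"
    unfolding F_nth[OF i] e by (rule cw_pos)
  show "F \<alpha> (\<alpha> + real MM * \<alpha>) a ! i = (replicate (a - 1) 0 @ [1]) ! i"
  proof (cases "i < a - 1")
    case True
    have "\<lfloor>real (MM + i + 2) * \<alpha>\<rfloor> = int N" by (rule fl_mid) (use True in auto)
    moreover have "\<lfloor>real (MM + i + 1) * \<alpha>\<rfloor> = int N" by (rule fl_mid) (use True in auto)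
    ultimately show ?thesis using v True by (simp add: nth_append)
  next
    case False
    then have ia: "i = a - 1" using i by simp
    have "MM + i + 2 = MM + a + 1" "MM + i + 1 = MM + a" using ia a1 by auto
    moreover have "\<lfloor>real (MM + a) * \<alpha>\<rfloor> = int N" by (rule fl_mid) (use a1 in auto)
    ultimately show ?thesis using v fl_top ia by (simp add: nth_append)
  qed
qed

lemma block2:
  assumes "\<lfloor>real (N+2) * \<beta>\<rfloor> = ff + 1"
  shows "cw \<alpha> (\<alpha> + real (MM + a) * \<alpha>) = 0"
proof -
  show ?thesis unfolding cw_pos[of \<alpha> "MM + a"] fl_top fl_top2[OF assms] by simp
qed

end



lemma cw_le1:
  assumes "0 < \<beta>" "\<beta> < 1"
  shows "cw \<beta> y \<le> 1"
proof -
  have "\<lfloor>y + \<beta>\<rfloor> \<le> \<lfloor>y\<rfloor> + 1" using assms by linarith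
  then show ?thesis unfolding cw_def by simp
qed

lemma phi0_len: "a \<ge> 1 \<Longrightarrow> c \<le> 1 \<Longrightarrow> length (phi0 a c) = a + c"
  by (cases "c = 0") (auto simp: phi0_def)

lemma phi_len:
  assumes a1: "a \<ge> 1" and gb: "good \<beta>"
  shows "length (phi a (F \<beta> \<beta> N)) = a * N + nat \<lfloor>real (N+1) * \<beta>\<rfloor>"
proof (induction N)
  case 0
  have "0 < \<beta>" "\<beta> < 1" using gb by (auto simp: good_def)
  then have "\<lfloor>\<beta>\<rfloor> = 0" by (simp add: floor_eq_iff)
  then show ?case by (simp add: phi_def F_def)
next
  case (Suc N)
  have b: "0 < \<beta>" "\<beta> < 1" using gb by (auto simp: good_def)
  let ?f = "\<lfloor>real (N+1) * \<beta>\<rfloor>" and ?g = "\<lfloor>real (N+2) * \<beta>\<rfloor>"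
  have c: "cw \<beta> (\<beta> + real N * \<beta>) = nat (?g - ?f)" by (rule cw_pos)
  have c1: "cw \<beta> (\<beta> + real N * \<beta>) \<le> 1" by (rule cw_le1[OF b])
  have f0: "?f \<ge> 0" using b by simp
  have fg: "?f \<le> ?g" using b by (intro floor_mono) simp
  have "length (phi a (F \<beta> \<beta> (Suc N))) = length (phi a (F \<beta> \<beta> N)) + length (phi0 a (cw \<beta> (\<beta> + real N * \<beta>)))"
    by (simp add: F_Suc phi_def)
  also have "\<dots> = a * N + nat ?f + (a + nat (?g - ?f))"
    using Suc.IH phi0_len[OF a1 c1] c by simp
  also have "\<dots> = a * Suc N + nat ?g"
  proof -
    have e: "nat ?f + nat (?g - ?f) = nat ?g"
      using f0 fg by (subst nat_add_distrib[symmetric]) auto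
    show ?thesis using e by simp
  qed
  finally show ?case by (simp add: add.commute)
qed

lemma key:
  assumes g: "good \<alpha>"
  defines "a \<equiv> cf_digit \<alpha> 1" and "\<beta> \<equiv> cf_rest \<alpha> 1"
  shows "phi a (F \<beta> \<beta> N) = F \<alpha> \<alpha> (length (phi a (F \<beta> \<beta> N)))"
proof (induction N)
  case 0
  then show ?case by (simp add: phi_def F_def)
next
  case (Suc N)
  have a1: "a \<ge> 1" and gb: "good \<beta>" and rel: "\<alpha> = 1 / (real a + \<beta>)"
    using alpha_rel[OF g] unfolding a_def \<beta>_def by auto
  have b: "0 < \<beta>" "\<beta> < 1" using gb by (auto simp: good_def)
  let ?c = "cw \<beta> (\<beta> + real N * \<beta>)"
  let ?M = "MM a N \<beta>"
  have lenM: "length (phi a (F \<beta> \<beta> N)) = ?M"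
    unfolding phi_len[OF a1 gb] MM_def[OF a1 gb rel] ff_def[OF a1 gb rel] ..
  have c: "?c = nat (\<lfloor>real (N+2) * \<beta>\<rfloor> - \<lfloor>real (N+1) * \<beta>\<rfloor>)" by (rule cw_pos)
  have c1: "?c \<le> 1" by (rule cw_le1[OF b])
  have blk: "phi0 a ?c = F \<alpha> (\<alpha> + real ?M * \<alpha>) (length (phi0 a ?c))"
  proof (cases "?c = 0")
    case True
    then show ?thesis using block1[OF a1 gb rel, of N] phi0_len[OF a1 c1]
      by (simp add: phi0_def)
  next
    case False
    then have c1': "?c = 1" using c1 by simp
    have fl: "\<lfloor>real (N+2) * \<beta>\<rfloor> = ff N \<beta> + 1"
      using c1' c unfolding ff_def[OF a1 gb rel] by linarith
    have "F \<alpha> (\<alpha> + real ?M * \<alpha>) (a + 1) = F \<alpha> (\<alpha> + real ?M * \<alpha>) a @ F \<alpha> (\<alpha> + real ?M * \<alpha> + real a * \<alpha>) 1"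
      by (rule F_append)
    also have "\<alpha> + real ?M * \<alpha> + real a * \<alpha> = \<alpha> + real (?M + a) * \<alpha>"
      by (simp add: algebra_simps)
    finally have "F \<alpha> (\<alpha> + real ?M * \<alpha>) (a + 1) = replicate (a-1) 0 @ [1] @ [cw \<alpha> (\<alpha> + real (?M + a) * \<alpha>)]"
      using block1[OF a1 gb rel, of N] by (simp add: F_def)
    also have "\<dots> = replicate (a-1) 0 @ [1, 0]"
      using block2[OF a1 gb rel fl] by simp
    finally show ?thesis using c1' phi0_len[OF a1 c1] by (simp add: phi0_def)
  qed
  have "phi a (F \<beta> \<beta> (Suc N)) = phi a (F \<beta> \<beta> N) @ phi0 a ?c"
    by (simp add: F_Suc phi_def)
  also have "\<dots> = F \<alpha> \<alpha> ?M @ F \<alpha> (\<alpha> + real ?M * \<alpha>) (length (phi0 a ?c))"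
    using Suc.IH lenM blk by simp
  also have "\<dots> = F \<alpha> \<alpha> (?M + length (phi0 a ?c))"
    by (rule F_append[symmetric])
  also have "?M + length (phi0 a ?c) = length (phi a (F \<beta> \<beta> (Suc N)))"
    using lenM by (simp add: F_Suc phi_def)
  finally show ?case .
qed

lemma std_F:
  assumes "good \<alpha>" "n \<ge> 1"
  shows "std_word \<alpha> n = F \<alpha> \<alpha> (length (std_word \<alpha> n))"
  using assms
proof (induction n arbitrary: \<alpha>)
  case 0
  then show ?case by simp
next
  case (Suc m)
  let ?a = "cf_digit \<alpha> 1" and ?\<beta> = "cf_rest \<alpha> 1"
  have a1: "?a \<ge> 1" and gb: "good ?\<beta>" and rel: "\<alpha> = 1 / (real ?a + ?\<beta>)"
    using alpha_rel[OF Suc.prems(1)] by auto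
  show ?case
  proof (cases "m = 0")
    case True
    have "MM ?a 0 ?\<beta> = 0"
      unfolding MM_def[OF a1 gb rel] ff_def[OF a1 gb rel] using gb
      by (simp add: good_def floor_eq_iff)
    then have "F \<alpha> \<alpha> ?a = replicate (?a - 1) 0 @ [1]"
      using block1[OF a1 gb rel, of 0] by simp
    moreover have "std_word \<alpha> (Suc 0) = replicate (?a - 1) 0 @ [1]"
      by (simp add: concat_rep_single)
    ultimately show ?thesis using True a1 by simp
  next
    case False
    have "std_word \<alpha> (Suc m) = phi ?a (std_word ?\<beta> m)"
      using std_phi_pair[OF Suc.prems(1), of m] by blast
    also have "\<dots> = phi ?a (F ?\<beta> ?\<beta> (length (std_word ?\<beta> m)))"
      using Suc.IH[OF gb] False by simp
    also have "\<dots> = F \<alpha> \<alpha> (length (phi ?a (F ?\<beta> ?\<beta> (length (std_word ?\<beta> m)))))"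
      by (rule key[OF Suc.prems(1)])
    finally show ?thesis by simp
  qed
qed



lemma sub_W:
  assumes g: "good \<alpha>" and u: "u \<noteq> []" and k: "k \<ge> 1" and s: "sublist u (std_word \<alpha> k)"
  shows "u \<in> W \<alpha>"
proof -
  have a: "0 < \<alpha>" "\<alpha> < 1" using g by (auto simp: good_def)
  have "sublist u (F \<alpha> \<alpha> (length (std_word \<alpha> k)))" using s std_F[OF g k] by simp
  then obtain x' where "u = F \<alpha> x' (length u)" using sublist_F by blast
  moreover have "F \<alpha> x' (length u) \<in> W \<alpha>" using F_in_W[OF a] u by simp
  ultimately show ?thesis by simp
qed

lemma part1:
  assumes g: "good \<alpha>" and w: "w \<in> W \<alpha>" and n: "n \<ge> 2"
    and len: "length w < length (std_word \<alpha> n)"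
  shows "sublist w (std_word \<alpha> (n + 2))"
proof -
  obtain N where N: "sublist w (F \<alpha> \<alpha> N)" using W_sub[OF g w] by blast
  define K where "K = max N (n + 2)"
  have K1: "K \<ge> 1" "K \<ge> n + 2" unfolding K_def by auto
  have LK: "length (std_word \<alpha> K) \<ge> N"
    using std_len_ge[OF g K1(1)] unfolding K_def by simp
  have "F \<alpha> \<alpha> (length (std_word \<alpha> K)) = F \<alpha> \<alpha> (N + (length (std_word \<alpha> K) - N))"
    using LK by simp
  also have "\<dots> = F \<alpha> \<alpha> N @ F \<alpha> (\<alpha> + real N * \<alpha>) (length (std_word \<alpha> K) - N)"
    by (rule F_append)
  finally have "sublist (F \<alpha> \<alpha> N) (std_word \<alpha> K)"
    using std_F[OF g K1(1)] by (metis sublist_append_rightI)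
  then have sK: "sublist w (std_word \<alpha> K)" using N by (metis sublist_order.order_trans)
  have n1: "n \<ge> 1" using n by simp
  show ?thesis by (rule chain[OF g n1 _ K1(2) sK]) (use len in simp)
qed

theorem proposition5:
  fixes \<alpha> :: real
  assumes "\<alpha> \<notin> \<rat>" and "0 < \<alpha>" and "\<alpha> < 1"
  shows "(\<forall>w \<in> W \<alpha>. \<forall>n::nat. n \<ge> 2 \<longrightarrow> length w < length (std_word \<alpha> n)
            \<longrightarrow> sublist w (std_word \<alpha> (n + 2)))
       \<and> (\<forall>w \<in> W \<alpha>. \<forall>n::nat. n \<ge> 1 \<longrightarrow> sublist w (std_word \<alpha> n)
            \<longrightarrow> (\<exists>x \<in> W \<alpha>. \<exists>y \<in> W \<alpha>. x @ w @ y = std_word \<alpha> (n + 3)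
                 \<and> length x \<ge> length (std_word \<alpha> (n + 1))
                 \<and> length y \<ge> length (std_word \<alpha> (n + 1))))"
proof -
  have g: "good \<alpha>" using assms by (simp add: good_def)
  have P1: "\<forall>w \<in> W \<alpha>. \<forall>n::nat. n \<ge> 2 \<longrightarrow> length w < length (std_word \<alpha> n)
            \<longrightarrow> sublist w (std_word \<alpha> (n + 2))"
    using part1[OF g] by blast
  have P2: "\<exists>x \<in> W \<alpha>. \<exists>y \<in> W \<alpha>. x @ w @ y = std_word \<alpha> (n + 3)
                 \<and> length x \<ge> length (std_word \<alpha> (n + 1))
                 \<and> length y \<ge> length (std_word \<alpha> (n + 1))"
    if sw: "sublist w (std_word \<alpha> n)" for w n
  proof -
    obtain x y where xy: "x @ w @ y = std_word \<alpha> (n + 3)"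
      "length x \<ge> length (std_word \<alpha> (n + 1))" "length y \<ge> length (std_word \<alpha> (n + 1))"
      using part2_comb[OF g sw] by blast
    have p: "length (std_word \<alpha> (n + 1)) \<ge> 1" by (rule std_len_pos)
    have k: "n + 3 \<ge> 1" by simp
    have "x \<in> W \<alpha>"
    proof (rule sub_W[OF g _ k])
      show "x \<noteq> []" using xy(2) p by auto
      show "sublist x (std_word \<alpha> (n + 3))" using xy(1) by (metis sublist_append_rightI)
    qed
    moreover have "y \<in> W \<alpha>"
    proof (rule sub_W[OF g _ k])
      show "y \<noteq> []" using xy(3) p by auto
      show "sublist y (std_word \<alpha> (n + 3))" using xy(1) by (metis sublist_append_leftI append.assoc)
    qed
    ultimately show ?thesis using xy by blast
  qed
  show ?thesis using P1 P2 by blast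
qed

end
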